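(* For every first-order formula $\varphi(x,y)$ over the signature $\sigma=\{E,<,A_1,\dots,A_m\}$, where $E$ and $<$ are binary and $A_1,\dots,A_m$ are unary, there is a directed graph $G$ consisting of a single directed path and a linear order $<$ on its vertices such that for all sets $A_1,\dots,A_m$ of nodes of $G$ there are nodes $u,v_1,v_2$ with $(G,<,A_1,\dots,A_m)\models\varphi(u,v_1)\leftrightarrow\varphi(u,v_2)$, while $v_2$ is reachable from $u$ in $G$ and $v_1$ is not.
   Context: Reachability means existence of a directed path along edges of $E$. *)

theory Defs
  imports Main
begin

datatype fo =
    FEq nat nat
  | FEdge nat nat
  | FLess nat nat
  | FPred nat nat   (* FPred i x : x is in A_i *)
  | FFalse
  | FNeg fo
  | FConj fo fo
  | FDisj fo fo
  | FEx nat fo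
  | FAll nat fo

fun fv :: "fo \<Rightarrow> nat set" where
  "fv (FEq x y) = {x, y}"
| "fv (FEdge x y) = {x, y}"
| "fv (FLess x y) = {x, y}"
| "fv (FPred i x) = {x}"
| "fv FFalse = {}"
| "fv (FNeg p) = fv p"
| "fv (FConj p q) = fv p \<union> fv q"
| "fv (FDisj p q) = fv p \<union> fv q"
| "fv (FEx x p) = fv p - {x}"
| "fv (FAll x p) = fv p - {x}"

fun preds :: "fo \<Rightarrow> nat set" where
  "preds (FPred i x) = {i}"
| "preds (FNeg p) = preds p"
| "preds (FConj p q) = preds p \<union> preds q"
| "preds (FDisj p q) = preds p \<union> preds q"
| "preds (FEx x p) = preds p"
| "preds (FAll x p) = preds p"
| "preds _ = {}"

fun sat :: "'a set \<Rightarrow> ('a \<times> 'a) set \<Rightarrow> ('a \<times> 'a) set \<Rightarrow> (nat \<Rightarrow> 'a set)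
             \<Rightarrow> (nat \<Rightarrow> 'a) \<Rightarrow> fo \<Rightarrow> bool" where
  "sat V E L A s (FEq x y) = (s x = s y)"
| "sat V E L A s (FEdge x y) = ((s x, s y) \<in> E)"
| "sat V E L A s (FLess x y) = ((s x, s y) \<in> L)"
| "sat V E L A s (FPred i x) = (s x \<in> A i)"
| "sat V E L A s FFalse = False"
| "sat V E L A s (FNeg p) = (\<not> sat V E L A s p)"
| "sat V E L A s (FConj p q) = (sat V E L A s p \<and> sat V E L A s q)"
| "sat V E L A s (FDisj p q) = (sat V E L A s p \<or> sat V E L A s q)"
| "sat V E L A s (FEx x p) = (\<exists>a\<in>V. sat V E L A (s(x := a)) p)"
| "sat V E L A s (FAll x p) = (\<forall>a\<in>V. sat V E L A (s(x := a)) p)"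

definition is_dipath_graph :: "'a set \<Rightarrow> ('a \<times> 'a) set \<Rightarrow> bool" where
  "is_dipath_graph V E \<longleftrightarrow>
     (\<exists>p. p \<noteq> [] \<and> distinct p \<and> set p = V \<and>
          E = {(p ! i, p ! Suc i) | i. Suc i < length p})"

definition is_strict_linorder_on :: "'a set \<Rightarrow> ('a \<times> 'a) set \<Rightarrow> bool" where
  "is_strict_linorder_on V L \<longleftrightarrow> L \<subseteq> V \<times> V \<and> strict_linear_order_on V L"

text \<open>phi(u,v): variable 0 is x, variable 1 is y.\<close>
definition sat2 :: "'a set \<Rightarrow> ('a \<times> 'a) set \<Rightarrow> ('a \<times> 'a) set \<Rightarrow> (nat \<Rightarrow> 'a set)
             \<Rightarrow> fo \<Rightarrow> 'a \<Rightarrow> 'a \<Rightarrow> bool" where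
  "sat2 V E L A phi u v = sat V E L A (\<lambda>i. if i = 0 then u else v) phi"

end

theory Submission
  imports Defs "HOL-Library.FSet"
begin



lemma path_reach_fwd:
  assumes "a \<le> b" "b < length p"
  shows "(p ! a, p ! b) \<in> {(p ! i, p ! Suc i) | i. Suc i < length p}\<^sup>*"
  using assms
proof (induction b)
  case 0 then show ?case by simp
next
  case (Suc b)
  show ?case
  proof (cases "a = Suc b")
    case True then show ?thesis by simp
  next
    case False
    then have "a \<le> b" using Suc by simp
    then have "(p ! a, p ! b) \<in> {(p ! i, p ! Suc i) | i. Suc i < length p}\<^sup>*" using Suc by simp
    moreover have "(p ! b, p ! Suc b) \<in> {(p ! i, p ! Suc i) | i. Suc i < length p}" using Suc by blast
    ultimately show ?thesis by (rule rtrancl_into_rtrancl)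
  qed
qed

lemma path_reach_bwd_aux:
  assumes "(x, z) \<in> {(p ! i, p ! Suc i) | i. Suc i < length p}\<^sup>*" "distinct p" "x = p ! a" "a < length p"
  shows "\<exists>b. b < length p \<and> z = p ! b \<and> a \<le> b"
  using assms(1)
proof (induction rule: rtrancl_induct)
  case base then show ?case using assms by auto
next
  case (step y w)
  then obtain b where b: "b < length p" "y = p ! b" "a \<le> b" by auto
  from step(2) obtain i where i: "y = p ! i" "w = p ! Suc i" "Suc i < length p" by auto
  have "i = b" using b i assms(2) nth_eq_iff_index_eq by (metis Suc_lessD)
  then show ?case using i b by (intro exI[of _ "Suc i"]) auto
qed

lemma path_reach_iff:
  assumes "distinct p" "a < length p" "b < length p"
  shows "(p ! a, p ! b) \<in> {(p ! i, p ! Suc i) | i. Suc i < length p}\<^sup>* \<longleftrightarrow> a \<le> b"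
proof
  assume "(p ! a, p ! b) \<in> {(p ! i, p ! Suc i) | i. Suc i < length p}\<^sup>*"
  from path_reach_bwd_aux[OF this assms(1) refl assms(2)] obtain b' where
    "b' < length p" "p ! b = p ! b'" "a \<le> b'" by auto
  then show "a \<le> b" using assms nth_eq_iff_index_eq by metis
next
  assume "a \<le> b" then show "(p ! a, p ! b) \<in> {(p ! i, p ! Suc i) | i. Suc i < length p}\<^sup>*" using path_reach_fwd assms by blast
qed




definition posinv :: "nat \<Rightarrow> nat \<Rightarrow> nat \<Rightarrow> nat" where
  "posinv t k n = (n mod t) * k + n div t"
definition pos :: "nat \<Rightarrow> nat \<Rightarrow> nat \<Rightarrow> nat" where
  "pos t k x = (x mod k) * t + x div k"
definition pth :: "nat \<Rightarrow> nat \<Rightarrow> nat list" where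
  "pth t k = map (posinv t k) [0..<t*k]"
definition Eg :: "nat \<Rightarrow> nat \<Rightarrow> (nat \<times> nat) set" where
  "Eg t k = {(pth t k ! i, pth t k ! Suc i) | i. Suc i < length (pth t k)}"
definition Lg :: "nat \<Rightarrow> nat \<Rightarrow> (nat \<times> nat) set" where
  "Lg t k = {(x,y). x < y \<and> y < t*k}"

lemma dm1: "c < (k::nat) \<Longrightarrow> (a*k + c) div k = a"
  by simp
lemma dm2: "c < (k::nat) \<Longrightarrow> (a*k + c) mod k = c"
  by simp

lemma divmod_lt: "x < t*k \<Longrightarrow> x div k < t" for x t k :: nat
  by (simp add: less_mult_imp_div_less mult.commute)

lemma posinv_lt: assumes "n < t*k" shows "posinv t k n < t*k"
proof -
  have t: "t > 0" and k: "k > 0" using assms by (auto intro: gr0I)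
  have "n div t < k" using assms by (metis divmod_lt mult.commute)
  moreover have "n mod t < t" using t by simp
  ultimately have "(n mod t) * k + n div t < (n mod t) * k + k" by simp
  also have "\<dots> = (n mod t + 1) * k" by simp
  also have "\<dots> \<le> t * k" using \<open>n mod t < t\<close> by (intro mult_right_mono) auto
  finally show ?thesis unfolding posinv_def .
qed

lemma pos_lt: assumes "x < t*k" shows "pos t k x < t*k"
  using posinv_lt[of x k t] assms by (simp add: posinv_def pos_def mult.commute)

lemma posinv_pos: assumes "x < t*k" shows "posinv t k (pos t k x) = x"
proof -
  have t: "t > 0" and k: "k > 0" using assms by (auto intro: gr0I)
  have r: "x div k < t" using assms divmod_lt by blast
  have "(x mod k * t + x div k) mod t = x div k" using r by simp
  moreover have "(x mod k * t + x div k) div t = x mod k" using r t by simp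
  ultimately show ?thesis unfolding posinv_def pos_def by simp
qed

lemma pos_posinv: assumes "n < t*k" shows "pos t k (posinv t k n) = n"
  using posinv_pos[of n k t] assms by (simp add: posinv_def pos_def mult.commute)

lemma pth_len[simp]: "length (pth t k) = t*k" by (simp add: pth_def)
lemma pth_nth: "n < t*k \<Longrightarrow> pth t k ! n = posinv t k n" by (simp add: pth_def)

lemma pth_distinct: "distinct (pth t k)"
  unfolding pth_def distinct_map
proof (intro conjI inj_onI)
  fix a b assume "a \<in> set [0..<t*k]" "b \<in> set [0..<t*k]" "posinv t k a = posinv t k b"
  then show "a = b" using pos_posinv by (metis atLeastLessThan_iff set_upt)
qed simp

lemma pth_set: "set (pth t k) = {..<t*k}"
proof
  show "set (pth t k) \<subseteq> {..<t*k}" by (auto simp: pth_def posinv_lt)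
  show "{..<t*k} \<subseteq> set (pth t k)"
  proof
    fix x assume "x \<in> {..<t*k}"
    then have "x = pth t k ! pos t k x" "pos t k x < t*k" using posinv_pos pos_lt pth_nth by auto
    then show "x \<in> set (pth t k)" by (metis nth_mem pth_len)
  qed
qed

lemma dipath: "0 < t*k \<Longrightarrow> is_dipath_graph {..<t*k} (Eg t k)"
  unfolding is_dipath_graph_def Eg_def
  apply (intro exI[of _ "pth t k"])
  using pth_len[of t k] by (auto simp: pth_distinct pth_set simp del: pth_len)

lemma linord: "is_strict_linorder_on {..<t*k} (Lg t k)"
  unfolding is_strict_linorder_on_def strict_linear_order_on_def Lg_def
  by (auto simp: trans_def irrefl_def total_on_def)

lemma reach_iff:
  assumes "x < t*k" "y < t*k"
  shows "(x, y) \<in> (Eg t k)\<^sup>* \<longleftrightarrow> pos t k x \<le> pos t k y"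
proof -
  have ex: "pth t k ! pos t k x = x" using assms pos_lt pth_nth posinv_pos by simp
  have ey: "pth t k ! pos t k y = y" using assms pos_lt pth_nth posinv_pos by simp
  have "(pth t k ! pos t k x, pth t k ! pos t k y) \<in> (Eg t k)\<^sup>* \<longleftrightarrow> pos t k x \<le> pos t k y"
    unfolding Eg_def by (rule path_reach_iff[OF pth_distinct]) (simp_all add: pos_lt assms)
  then show ?thesis using ex ey by simp
qed

lemma X: assumes True: "r + 1 < t" and c: "c < k" and r_def: "r = x div k" and c_def: "c = x mod k"
  shows "(Suc (pos t k x) < t*k \<and> y = posinv t k (Suc (pos t k x))) \<longleftrightarrow> (y div k = r + 1 \<and> y mod k = c)"
proof -
    have p: "Suc (pos t k x) = c*t + (r+1)" by (simp add: pos_def r_def c_def)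
    have "c*t + (r+1) < (c+1)*t" using True by simp
    also have "(c+1)*t \<le> k*t" using c by (intro mult_right_mono) auto
    finally have f1: "Suc (pos t k x) < t*k" using p by (simp add: mult.commute)
    have d1: "(c*t + (r+1)) div t = c" using True by (rule dm1)
    have d2: "(c*t + (r+1)) mod t = r+1" using True by (rule dm2)
    have f2: "posinv t k (Suc (pos t k x)) = (r+1)*k + c" unfolding p posinv_def d1 d2 by simp
    have f3: "y = (r+1)*k + c \<longleftrightarrow> y div k = r + 1 \<and> y mod k = c"
    proof
      assume y: "y = (r+1)*k + c"
      show "y div k = r + 1 \<and> y mod k = c" unfolding y by (intro conjI dm1[OF c] dm2[OF c])
    next
      assume "y div k = r + 1 \<and> y mod k = c"
      then show "y = (r+1)*k + c" by (metis div_mult_mod_eq)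
    qed
    have "(Suc (pos t k x) < t*k \<and> y = posinv t k (Suc (pos t k x))) \<longleftrightarrow> y = (r+1)*k + c"
      unfolding f2 using f1 by simp
    then show ?thesis using f3 by simp
qed

lemma E_iff:
  assumes xk: "x < t*k" "y < t*k"
  shows "(x, y) \<in> Eg t k \<longleftrightarrow>
    ((x div k + 1 < t \<and> y div k = x div k + 1 \<and> y mod k = x mod k) \<or>
     (x div k + 1 = t \<and> y div k = 0 \<and> y mod k = x mod k + 1))"
proof -
  have t: "t > 0" and k: "k > 0" using assms by (auto intro: gr0I)
  define r where "r = x div k" define c where "c = x mod k"
  have r: "r < t" using assms divmod_lt r_def by blast
  have c: "c < k" using k c_def by simp
  have x: "x = r*k + c" by (simp add: r_def c_def)
  have "(x, y) \<in> Eg t k \<longleftrightarrow> Suc (pos t k x) < t*k \<and> y = posinv t k (Suc (pos t k x))"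
  proof
    assume "(x,y) \<in> Eg t k"
    then obtain n where n: "x = pth t k ! n" "y = pth t k ! Suc n" "Suc n < t*k"
      unfolding Eg_def by auto
    then have xy: "x = posinv t k n" "y = posinv t k (Suc n)" using pth_nth by auto
    then have "pos t k x = n" using pos_posinv n by auto
    then show "Suc (pos t k x) < t*k \<and> y = posinv t k (Suc (pos t k x))"
      using n xy by auto
  next
    assume a: "Suc (pos t k x) < t*k \<and> y = posinv t k (Suc (pos t k x))"
    then have e1: "x = pth t k ! pos t k x" and e2: "y = pth t k ! Suc (pos t k x)"
      using posinv_pos assms pth_nth by auto
    show "(x,y) \<in> Eg t k" unfolding Eg_def mem_Collect_eq
      apply (rule exI[of _ "pos t k x"])
      using e1 e2 a by simp
  qed
  also have "\<dots> \<longleftrightarrow> ((r + 1 < t \<and> y div k = r + 1 \<and> y mod k = c) \<or>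
     (r + 1 = t \<and> y div k = 0 \<and> y mod k = c + 1))"
  proof (cases "r + 1 < t")
    case True
    have "(Suc (pos t k x) < t*k \<and> y = posinv t k (Suc (pos t k x))) \<longleftrightarrow> (y div k = r + 1 \<and> y mod k = c)"
      by (rule X[OF True c r_def c_def])
    then show ?thesis using True by simp
  next
    case False
    then have rt: "r + 1 = t" using r by simp
    have p: "Suc (pos t k x) = (c+1)*t" using rt by (simp add: pos_def r_def c_def)
    have q1: "posinv t k (Suc (pos t k x)) = c+1" using p t by (simp add: posinv_def)
    have q2: "Suc (pos t k x) < t*k \<longleftrightarrow> c + 1 < k" unfolding p using t by (metis mult.commute mult_less_cancel2)
    have q3: "c + 1 < k \<Longrightarrow> y = c+1 \<longleftrightarrow> y div k = 0 \<and> y mod k = c + 1"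
    proof -
      assume ck: "c + 1 < k"
      show ?thesis
      proof
        assume "y = c + 1" then show "y div k = 0 \<and> y mod k = c + 1" using ck by simp
      next
        assume "y div k = 0 \<and> y mod k = c + 1"
        then show "y = c + 1" using div_mult_mod_eq[of y k] by simp
      qed
    qed
    have q4: "y div k = 0 \<and> y mod k = c + 1 \<Longrightarrow> c + 1 < k" using k
      by (metis mod_less_divisor)
    have "(Suc (pos t k x) < t*k \<and> y = posinv t k (Suc (pos t k x))) \<longleftrightarrow> (c+1 < k \<and> y = c+1)"
      unfolding q1 q2 by (rule refl)
    also have "\<dots> \<longleftrightarrow> (y div k = 0 \<and> y mod k = c+1)"
    proof
      assume h: "c+1 < k \<and> y = c+1"
      then have "c+1 < k" "y = c+1" by auto
      then show "y div k = 0 \<and> y mod k = c+1" using q3[OF \<open>c+1 < k\<close>] by simp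
    next
      assume h: "y div k = 0 \<and> y mod k = c+1"
      then have ck: "c + 1 < k" using q4 by simp
      then show "c+1 < k \<and> y = c+1" using q3[OF ck] h by simp
    qed
    finally show ?thesis using rt by simp
  qed
  finally have "(x, y) \<in> Eg t k \<longleftrightarrow> ((r + 1 < t \<and> y div k = r + 1 \<and> y mod k = c) \<or>
     (r + 1 = t \<and> y div k = 0 \<and> y mod k = c + 1))" .
  then show ?thesis by (simp add: r_def c_def)
qed




datatype 'a htp = HT 'a "'a htp fset"

definition atom :: "(nat \<Rightarrow> 'l) \<Rightarrow> nat list \<Rightarrow> 'l list \<times> bool list list" where
  "atom W cs = (map W cs, map (\<lambda>a. map (\<lambda>b. a < b) cs) cs)"

fun tp :: "(nat \<Rightarrow> 'l) \<Rightarrow> nat \<Rightarrow> nat \<Rightarrow> nat list \<Rightarrow> ('l list \<times> bool list list) htp" where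
  "tp W k 0 cs = HT (atom W cs) {||}"
| "tp W k (Suc j) cs = HT (atom W cs) (fset_of_list (map (\<lambda>c. tp W k j (cs @ [c])) [0..<k]))"

lemma tp_atom: "tp W k j cs = tp W k j cs' \<Longrightarrow> atom W cs = atom W cs'"
  by (cases j) auto

lemma tp_forth:
  assumes "tp W k (Suc j) cs = tp W k (Suc j) cs'" "c < k"
  shows "\<exists>c'<k. tp W k j (cs @ [c]) = tp W k j (cs' @ [c'])"
proof -
  have "fset_of_list (map (\<lambda>c. tp W k j (cs @ [c])) [0..<k]) =
        fset_of_list (map (\<lambda>c. tp W k j (cs' @ [c])) [0..<k])" using assms(1) by simp
  then have "set (map (\<lambda>c. tp W k j (cs @ [c])) [0..<k]) = set (map (\<lambda>c. tp W k j (cs' @ [c])) [0..<k])"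
    by (metis fset_of_list.rep_eq)
  moreover have "tp W k j (cs @ [c]) \<in> set (map (\<lambda>c. tp W k j (cs @ [c])) [0..<k])" using assms(2) by auto
  ultimately show ?thesis by auto
qed

lemma tp_mono: "tp W k (Suc j) cs = tp W k (Suc j) cs' \<Longrightarrow> tp W k j cs = tp W k j cs'"
proof (induction j arbitrary: cs cs')
  case 0 then show ?case by simp
next
  case (Suc j)
  have a: "atom W cs = atom W cs'" using tp_atom Suc.prems by blast
  have "set (map (\<lambda>c. tp W k j (cs @ [c])) [0..<k]) = set (map (\<lambda>c. tp W k j (cs' @ [c])) [0..<k])"
  proof -
    have "\<forall>c<k. \<exists>c'<k. tp W k j (cs @ [c]) = tp W k j (cs' @ [c'])"
      using tp_forth[OF Suc.prems] Suc.IH by blast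
    moreover have "\<forall>c<k. \<exists>c'<k. tp W k j (cs' @ [c]) = tp W k j (cs @ [c'])"
      using tp_forth[OF Suc.prems[symmetric]] Suc.IH by blast
    ultimately show ?thesis by (auto simp: image_def) (metis atLeastLessThan_iff le0)+
  qed
  then show ?case using a by (simp del: tp.simps(2)) (simp add: fset_of_list.abs_eq)
qed

definition Atoms :: "'l set \<Rightarrow> nat \<Rightarrow> ('l list \<times> bool list list) set" where
  "Atoms \<Lambda> l = {xs. set xs \<subseteq> \<Lambda> \<and> length xs = l} \<times> {M. set M \<subseteq> {r. set r \<subseteq> UNIV \<and> length r = l} \<and> length M = l}"

lemma finite_Atoms: "finite \<Lambda> \<Longrightarrow> finite (Atoms \<Lambda> l)"
  unfolding Atoms_def by (intro finite_cartesian_product finite_lists_length_eq) auto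

fun Tset :: "'l set \<Rightarrow> nat \<Rightarrow> nat \<Rightarrow> ('l list \<times> bool list list) htp set" where
  "Tset \<Lambda> 0 l = (\<lambda>a. HT a {||}) ` Atoms \<Lambda> l"
| "Tset \<Lambda> (Suc j) l = (\<lambda>(a, X). HT a X) ` (Atoms \<Lambda> l \<times> {X. fset X \<subseteq> Tset \<Lambda> j (Suc l)})"

lemma finite_fsets: "finite S \<Longrightarrow> finite {X. fset X \<subseteq> S}"
proof -
  assume "finite S"
  have "fset ` {X. fset X \<subseteq> S} \<subseteq> Pow S" by auto
  then have "finite (fset ` {X. fset X \<subseteq> S})" using \<open>finite S\<close> by (meson finite_Pow_iff finite_subset)
  then show ?thesis by (rule finite_imageD) (auto intro: inj_onI simp: fset_inject)
qed

lemma finite_Tset: "finite \<Lambda> \<Longrightarrow> finite (Tset \<Lambda> j l)"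
  by (induction j arbitrary: l) (auto intro!: finite_imageI finite_cartesian_product finite_Atoms finite_fsets)

lemma atom_in: "range W \<subseteq> \<Lambda> \<Longrightarrow> atom W cs \<in> Atoms \<Lambda> (length cs)"
  unfolding atom_def Atoms_def by auto

lemma tp_in_Tset: "range W \<subseteq> \<Lambda> \<Longrightarrow> tp W k j cs \<in> Tset \<Lambda> j (length cs)"
proof (induction j arbitrary: cs)
  case 0 then show ?case using atom_in[OF 0, of cs] by (simp add: image_iff)
next
  case (Suc j)
  have "fset (fset_of_list (map (\<lambda>c. tp W k j (cs @ [c])) [0..<k])) \<subseteq> Tset \<Lambda> j (Suc (length cs))"
    using Suc by (auto simp: fset_of_list.rep_eq) (metis length_append_singleton)
  then show ?case using atom_in[OF Suc.prems] by (auto simp: image_def)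
qed

lemma pigeon:
  assumes fin: "finite \<Lambda>" and W: "range W \<subseteq> \<Lambda>"
    and k: "2 * card (Tset \<Lambda> j (Suc 0)) + 2 \<le> k"
  shows "\<exists>i i'. i' + 2 \<le> i \<and> i < k \<and> tp W k j [i] = tp W k j [i']"
proof -
  define N where "N = card (Tset \<Lambda> j (Suc 0))"
  define f where "f n = tp W k j [2*n]" for n
  have fn: "f n \<in> Tset \<Lambda> j (Suc 0)" for n unfolding f_def using tp_in_Tset[OF W, of k j "[2*n]"] by simp
  have sub: "f ` {..N} \<subseteq> Tset \<Lambda> j (Suc 0)" using fn by auto
  have "\<not> inj_on f {..N}"
  proof
    assume "inj_on f {..N}"
    then have "card (f ` {..N}) = Suc N" by (simp add: card_image)
    moreover have "card (f ` {..N}) \<le> N" using sub card_mono finite_Tset[OF fin] N_def by metis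
    ultimately show False by simp
  qed
  then obtain a b where ab: "a \<le> N" "b \<le> N" "a \<noteq> b" "f a = f b" unfolding inj_on_def by auto
  show ?thesis
  proof (cases "a < b")
    case True
    then show ?thesis using ab k N_def by (intro exI[of _ "2*b"] exI[of _ "2*a"]) (auto simp: f_def)
  next
    case False
    then have "b < a" using ab by simp
    then show ?thesis using ab k N_def by (intro exI[of _ "2*a"] exI[of _ "2*b"]) (auto simp: f_def)
  qed
qed




fun qr :: "fo \<Rightarrow> nat" where
  "qr (FNeg p) = qr p"
| "qr (FConj p q) = max (qr p) (qr q)"
| "qr (FDisj p q) = max (qr p) (qr q)"
| "qr (FEx x p) = Suc (qr p)"
| "qr (FAll x p) = Suc (qr p)"
| "qr _ = 0"

lemma rc_eq: "0 < k \<Longrightarrow> (x::nat) = y \<longleftrightarrow> x div k = y div k \<and> x mod k = y mod k"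
  by (metis div_mult_mod_eq)

lemma rc_less: "0 < k \<Longrightarrow> (x::nat) < y \<longleftrightarrow> x div k < y div k \<or> (x div k = y div k \<and> x mod k < y mod k)"
proof -
  assume k: "0 < k"
  have x: "x = x div k * k + x mod k" and y: "y = y div k * k + y mod k" by simp_all
  show ?thesis
  proof
    assume "x < y"
    then have "x div k \<le> y div k" by (simp add: div_le_mono)
    then show "x div k < y div k \<or> (x div k = y div k \<and> x mod k < y mod k)"
      using \<open>x < y\<close> x y by (metis add_less_cancel_left le_neq_implies_less)
  next
    assume h: "x div k < y div k \<or> (x div k = y div k \<and> x mod k < y mod k)"
    show "x < y"
    proof (cases "x div k < y div k")
      case True
      then have "x div k * k + k \<le> y div k * k" by (metis Suc_leI mult_Suc mult_le_mono1 add.commute)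
      moreover have "x mod k < k" using k by simp
      ultimately show ?thesis using x y by linarith
    next
      case False then show ?thesis using h x y by (metis add_less_cancel_left)
    qed
  qed
qed

lemma rc_lt: "r < t \<Longrightarrow> c < k \<Longrightarrow> r * k + c < t * (k::nat)"
proof -
  assume "r < t" "c < k"
  then have "r * k + c < r * k + k" by simp
  also have "\<dots> = (r + 1) * k" by simp
  also have "\<dots> \<le> t * k" using \<open>r < t\<close> by (intro mult_right_mono) auto
  finally show ?thesis .
qed

locale grid =
  fixes t k m :: nat and A :: "nat \<Rightarrow> nat set" and r0 D :: nat
  assumes k0: "0 < k" and Dr0: "D \<le> r0" and r0t: "r0 + D + 1 \<le> t"
begin

definition dd :: "nat \<Rightarrow> nat" where
  "dd x = (if r0 \<le> x div k then x div k - r0 else r0 - x div k)"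

definition W :: "nat \<Rightarrow> bool list list" where
  "W c = map (\<lambda>r. map (\<lambda>i. r*k + c \<in> A i) [0..<m]) [0..<t]"

definition inv :: "nat \<Rightarrow> (nat \<times> nat) list \<Rightarrow> bool" where
  "inv j ps \<longleftrightarrow> (\<forall>(x,y)\<in>set ps. x < t*k \<and> y < t*k \<and> x div k = y div k) \<and>
     (\<exists>Z F. Z + 2^j + 1 \<le> F \<and> F \<le> D \<and> (\<forall>(x,y)\<in>set ps. dd x \<le> Z \<or> (F \<le> dd x \<and> y = x)) \<and>
        tp W k j (map (\<lambda>p. fst p mod k) (filter (\<lambda>p. dd (fst p) \<le> Z) ps)) =
        tp W k j (map (\<lambda>p. snd p mod k) (filter (\<lambda>p. dd (fst p) \<le> Z) ps)))"

lemma W_nth: "r < t \<Longrightarrow> i < m \<Longrightarrow> W c ! r ! i = (r*k + c \<in> A i)"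
  by (simp add: W_def)

lemma inv_swap:
  assumes "inv j ps" shows "inv j (map prod.swap ps)"
proof -
  from assms obtain Z F where ZF: "Z + 2^j + 1 \<le> F" "F \<le> D"
    "\<forall>(x,y)\<in>set ps. dd x \<le> Z \<or> (F \<le> dd x \<and> y = x)"
    "tp W k j (map (\<lambda>p. fst p mod k) (filter (\<lambda>p. dd (fst p) \<le> Z) ps)) =
     tp W k j (map (\<lambda>p. snd p mod k) (filter (\<lambda>p. dd (fst p) \<le> Z) ps))"
    and rows: "\<forall>(x,y)\<in>set ps. x < t*k \<and> y < t*k \<and> x div k = y div k"
    unfolding inv_def by blast
  have ddeq: "\<forall>p\<in>set ps. dd (snd p) = dd (fst p)" using rows by (auto simp: dd_def)
  have f: "filter (\<lambda>p. dd (fst p) \<le> Z) (map prod.swap ps) = map prod.swap (filter (\<lambda>p. dd (fst p) \<le> Z) ps)"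
    unfolding filter_map o_def using ddeq by (auto intro!: filter_cong arg_cong[where f="map prod.swap"])
  show ?thesis unfolding inv_def
  proof (intro conjI exI)
    show "\<forall>(x,y)\<in>set (map prod.swap ps). x < t*k \<and> y < t*k \<and> x div k = y div k" using rows by auto
    show "Z + 2^j + 1 \<le> F" "F \<le> D" using ZF by auto
    show "\<forall>(x,y)\<in>set (map prod.swap ps). dd x \<le> Z \<or> (F \<le> dd x \<and> y = x)"
      using ZF(3) ddeq by fastforce
    show "tp W k j (map (\<lambda>p. fst p mod k) (filter (\<lambda>p. dd (fst p) \<le> Z) (map prod.swap ps))) =
        tp W k j (map (\<lambda>p. snd p mod k) (filter (\<lambda>p. dd (fst p) \<le> Z) (map prod.swap ps)))"
      unfolding f using ZF(4) by (simp add: o_def)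
  qed
qed


lemma inv_forth:
  assumes inv: "inv (Suc j) ps" and a: "a < t*k"
  shows "\<exists>b<t*k. inv j (ps @ [(a,b)])"
proof -
  from inv obtain Z F where ZF: "Z + 2^(Suc j) + 1 \<le> F" "F \<le> D"
    and cl: "\<forall>(x,y)\<in>set ps. dd x \<le> Z \<or> (F \<le> dd x \<and> y = x)"
    and tpeq: "tp W k (Suc j) (map (\<lambda>p. fst p mod k) (filter (\<lambda>p. dd (fst p) \<le> Z) ps)) =
     tp W k (Suc j) (map (\<lambda>p. snd p mod k) (filter (\<lambda>p. dd (fst p) \<le> Z) ps))"
    and rows: "\<forall>(x,y)\<in>set ps. x < t*k \<and> y < t*k \<and> x div k = y div k"
    unfolding inv_def by blast
  define P where "P = (2::nat)^j"
  have ZFP: "Z + 2*P + 1 \<le> F" using ZF(1) by (simp add: P_def)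
  have key: "\<exists>Z' F'. Z' + P + 1 \<le> F' \<and> F' \<le> F \<and> Z \<le> Z' \<and> (dd a \<le> Z' \<or> F' \<le> dd a)"
  proof (cases "dd a \<le> Z \<or> F \<le> dd a")
    case True then show ?thesis using ZFP by (intro exI[of _ Z] exI[of _ F]) auto
  next
    case False
    show ?thesis
    proof (cases "2 * dd a \<le> F + Z")
      case True
      then have "2*dd a + 2*P < 2*F" using ZFP by linarith
      then have "dd a + P + 1 \<le> F" by linarith
      then show ?thesis using False by (intro exI[of _ "dd a"] exI[of _ F]) auto
    next
      case False2: False
      then have "2*Z + 2*P < 2 * dd a" using ZFP by linarith
      then have "Z + P + 1 \<le> dd a" by linarith
      then show ?thesis using False by (intro exI[of _ Z] exI[of _ "dd a"]) auto
    qed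
  qed
  then obtain Z' F' where Z'F': "Z' + P + 1 \<le> F'" "F' \<le> F" "Z \<le> Z'" "dd a \<le> Z' \<or> F' \<le> dd a"
    by blast
  have ZF': "Z' < F" "Z < F" using Z'F' by auto
  have fil: "filter (\<lambda>p. dd (fst p) \<le> Z') ps = filter (\<lambda>p. dd (fst p) \<le> Z) ps"
  proof (rule filter_cong[OF refl])
    fix p assume p: "p \<in> set ps"
    have "dd (fst p) \<le> Z \<or> F \<le> dd (fst p)" using cl p by (cases p) auto
    then show "(dd (fst p) \<le> Z') = (dd (fst p) \<le> Z)" using ZF' Z'F'(3) by auto
  qed
  have cl': "\<forall>(x,y)\<in>set ps. dd x \<le> Z' \<or> (F' \<le> dd x \<and> y = x)"
  proof (rule ballI)
    fix p assume p: "p \<in> set ps"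
    obtain x y where xy: "p = (x,y)" by (cases p)
    have "dd x \<le> Z \<or> (F \<le> dd x \<and> y = x)" using cl p xy by auto
    then show "case p of (x,y) \<Rightarrow> dd x \<le> Z' \<or> (F' \<le> dd x \<and> y = x)" using Z'F'(2,3) xy by auto
  qed
  have rk: "a div k < t" using a divmod_lt by blast
  show ?thesis
  proof (cases "dd a \<le> Z'")
    case True
    obtain c' where c': "c' < k"
      "tp W k j (map (\<lambda>p. fst p mod k) (filter (\<lambda>p. dd (fst p) \<le> Z) ps) @ [a mod k]) =
       tp W k j (map (\<lambda>p. snd p mod k) (filter (\<lambda>p. dd (fst p) \<le> Z) ps) @ [c'])"
      using tp_forth[OF tpeq, of "a mod k"] k0 by auto
    define b where "b = (a div k) * k + c'"
    have b: "b < t*k" "b div k = a div k" "b mod k = c'"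
      using rc_lt[OF rk c'(1)] dm1[OF c'(1)] dm2[OF c'(1)] by (simp_all add: b_def)
    have "inv j (ps @ [(a,b)])"
      unfolding inv_def
    proof (intro conjI exI)
      show "\<forall>(x,y)\<in>set (ps @ [(a,b)]). x < t*k \<and> y < t*k \<and> x div k = y div k"
        using rows a b by auto
      show "Z' + 2^j + 1 \<le> F'" "F' \<le> D" using Z'F' ZF by (auto simp: P_def)
      show "\<forall>(x,y)\<in>set (ps @ [(a,b)]). dd x \<le> Z' \<or> (F' \<le> dd x \<and> y = x)"
        using cl' True by auto
      show "tp W k j (map (\<lambda>p. fst p mod k) (filter (\<lambda>p. dd (fst p) \<le> Z') (ps @ [(a,b)]))) =
            tp W k j (map (\<lambda>p. snd p mod k) (filter (\<lambda>p. dd (fst p) \<le> Z') (ps @ [(a,b)])))"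
        using c'(2) True fil b by simp
    qed
    then show ?thesis using b by blast
  next
    case False
    then have FA: "F' \<le> dd a" "\<not> dd a \<le> Z'" using Z'F' by auto
    have "inv j (ps @ [(a,a)])"
      unfolding inv_def
    proof (intro conjI exI)
      show "\<forall>(x,y)\<in>set (ps @ [(a,a)]). x < t*k \<and> y < t*k \<and> x div k = y div k"
        using rows a by auto
      show "Z' + 2^j + 1 \<le> F'" "F' \<le> D" using Z'F' ZF by (auto simp: P_def)
      show "\<forall>(x,y)\<in>set (ps @ [(a,a)]). dd x \<le> Z' \<or> (F' \<le> dd x \<and> y = x)"
        using cl' FA by auto
      show "tp W k j (map (\<lambda>p. fst p mod k) (filter (\<lambda>p. dd (fst p) \<le> Z') (ps @ [(a,a)]))) =
            tp W k j (map (\<lambda>p. snd p mod k) (filter (\<lambda>p. dd (fst p) \<le> Z') (ps @ [(a,a)])))"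
        using tp_mono[OF tpeq] FA fil by simp
    qed
    then show ?thesis using a by blast
  qed
qed

lemma inv_back:
  assumes inv: "inv (Suc j) ps" and b: "b < t*k"
  shows "\<exists>a<t*k. inv j (ps @ [(a,b)])"
proof -
  obtain a where a: "a < t*k" "inv j (map prod.swap ps @ [(b,a)])"
    using inv_forth[OF inv_swap[OF inv] b] by blast
  have "inv j (map prod.swap (map prod.swap ps @ [(b,a)]))" using inv_swap[OF a(2)] .
  then have "inv j (ps @ [(a,b)])" by (simp add: o_def)
  then show ?thesis using a by blast
qed

end



context grid begin

lemma A_W: "x < t*k \<Longrightarrow> i < m \<Longrightarrow> (x \<in> A i) = W (x mod k) ! (x div k) ! i"
  using W_nth[of "x div k" i "x mod k"] divmod_lt[of x t k] by simp

lemma inv_atomic: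
  assumes inv: "inv j ps" and px: "(x,x') \<in> set ps" and py: "(y,y') \<in> set ps"
  shows "(x = y \<longleftrightarrow> x' = y') \<and> ((x,y) \<in> Eg t k \<longleftrightarrow> (x',y') \<in> Eg t k) \<and>
         ((x,y) \<in> Lg t k \<longleftrightarrow> (x',y') \<in> Lg t k) \<and> (\<forall>i<m. x \<in> A i \<longleftrightarrow> x' \<in> A i)"
proof -
  from inv obtain Z F where ZF: "Z + 2^j + 1 \<le> F" "F \<le> D"
    and cl: "\<forall>(x,y)\<in>set ps. dd x \<le> Z \<or> (F \<le> dd x \<and> y = x)"
    and tpeq: "tp W k j (map (\<lambda>p. fst p mod k) (filter (\<lambda>p. dd (fst p) \<le> Z) ps)) =
     tp W k j (map (\<lambda>p. snd p mod k) (filter (\<lambda>p. dd (fst p) \<le> Z) ps))"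
    and rows: "\<forall>(x,y)\<in>set ps. x < t*k \<and> y < t*k \<and> x div k = y div k"
    unfolding inv_def by blast
  define zl where "zl = filter (\<lambda>p. dd (fst p) \<le> Z) ps"
  define cs where "cs = map (\<lambda>p. fst p mod k) zl"
  define cs' where "cs' = map (\<lambda>p. snd p mod k) zl"
  have "atom W cs = atom W cs'" using tp_atom tpeq unfolding cs_def cs'_def zl_def by blast
  then have mW: "map W cs = map W cs'"
    and mO: "map (\<lambda>a. map (\<lambda>b. a < b) cs) cs = map (\<lambda>a. map (\<lambda>b. a < b) cs') cs'"
    by (simp_all add: atom_def)
  have lens: "length cs = length zl" "length cs' = length zl" by (simp_all add: cs_def cs'_def)
  have zf: "\<exists>n<length zl. cs!n = u mod k \<and> cs'!n = u' mod k" if "(u,u') \<in> set ps" "dd u \<le> Z" for u u'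
  proof -
    have "(u,u') \<in> set zl" using that by (simp add: zl_def)
    then obtain n where "n < length zl" "zl ! n = (u,u')" by (meson in_set_conv_nth)
    then show ?thesis by (intro exI[of _ n]) (simp add: cs_def cs'_def)
  qed
  have zW: "W (cs!n) = W (cs'!n)" if "n < length zl" for n
    using arg_cong[OF mW, of "\<lambda>l. l ! n"] that lens by simp
  have zO: "(cs!n1 < cs!n2) = (cs'!n1 < cs'!n2)" if "n1 < length zl" "n2 < length zl" for n1 n2
    using arg_cong[OF mO, of "\<lambda>l. l ! n1 ! n2"] that lens by simp
  have ZD: "Z < D" using ZF by simp
  have zrow: "1 \<le> u div k \<and> u div k + 1 < t" if "dd u \<le> Z" for u
    using that ZD Dr0 r0t unfolding dd_def by (auto split: if_splits)
  have sep: "u div k \<noteq> v div k \<and> v div k \<noteq> u div k + 1 \<and> u div k \<noteq> v div k + 1"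
    if "dd u \<le> Z" "F \<le> dd v" for u v
  proof -
    have "(1::nat) \<le> 2^j" by simp
    then have "Z + 2 \<le> F" using ZF by linarith
    then show ?thesis using that unfolding dd_def by (auto split: if_splits)
  qed
  have rx: "x < t*k" "x' < t*k" "x div k = x' div k" and ry: "y < t*k" "y' < t*k" "y div k = y' div k"
    using rows px py by auto
  have clx: "dd x \<le> Z \<or> (F \<le> dd x \<and> x' = x)" and cly: "dd y \<le> Z \<or> (F \<le> dd y \<and> y' = y)"
    using cl px py by auto
  have Aeq: "\<forall>i<m. x \<in> A i \<longleftrightarrow> x' \<in> A i"
  proof (cases "dd x \<le> Z")
    case True
    then obtain n where n: "n < length zl" "cs!n = x mod k" "cs'!n = x' mod k" using zf px by blast
    then have "W (x mod k) = W (x' mod k)" using zW by metis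
    then show ?thesis using A_W rx by simp
  next
    case False then show ?thesis using clx by auto
  qed
  have main: "(x = y \<longleftrightarrow> x' = y') \<and> ((x,y) \<in> Eg t k \<longleftrightarrow> (x',y') \<in> Eg t k) \<and>
         ((x,y) \<in> Lg t k \<longleftrightarrow> (x',y') \<in> Lg t k)"
  proof (cases "dd x \<le> Z")
    case zx: True
    show ?thesis
    proof (cases "dd y \<le> Z")
      case zy: True
      obtain n1 where n1: "n1 < length zl" "cs!n1 = x mod k" "cs'!n1 = x' mod k" using zf px zx by blast
      obtain n2 where n2: "n2 < length zl" "cs!n2 = y mod k" "cs'!n2 = y' mod k" using zf py zy by blast
      have o1: "(x mod k < y mod k) = (x' mod k < y' mod k)" using zO[OF n1(1) n2(1)] n1 n2 by simp
      have o2: "(y mod k < x mod k) = (y' mod k < x' mod k)" using zO[OF n2(1) n1(1)] n1 n2 by simp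
      have c1: "(x mod k = y mod k) = (\<not> x mod k < y mod k \<and> \<not> y mod k < x mod k)" by linarith
      have c2: "(x' mod k = y' mod k) = (\<not> x' mod k < y' mod k \<and> \<not> y' mod k < x' mod k)" by linarith
      have ceq: "(x mod k = y mod k) = (x' mod k = y' mod k)" using o1 o2 c1 c2 by simp
      have zr: "1 \<le> x div k" "x div k + 1 < t" "1 \<le> y div k" using zrow zx zy by auto
      have e1: "(x = y) = (x' = y')"
        unfolding rc_eq[OF k0, of x y] rc_eq[OF k0, of x' y'] rx(3) ry(3) ceq by (rule refl)
      have E1: "(x,y) \<in> Eg t k \<longleftrightarrow> (y div k = x div k + 1 \<and> y mod k = x mod k)"
        unfolding E_iff[OF rx(1) ry(1)] using zr(2) by auto
      have E2: "(x',y') \<in> Eg t k \<longleftrightarrow> (y' div k = x' div k + 1 \<and> y' mod k = x' mod k)"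
        unfolding E_iff[OF rx(2) ry(2)] using zr(2) rx(3) by auto
      have ceq': "(y mod k = x mod k) = (y' mod k = x' mod k)" using ceq by auto
      have e2: "((x,y) \<in> Eg t k) = ((x',y') \<in> Eg t k)"
        unfolding E1 E2 ceq' rx(3) ry(3) by (rule refl)
      have L1: "(x,y) \<in> Lg t k \<longleftrightarrow> x < y" "(x',y') \<in> Lg t k \<longleftrightarrow> x' < y'"
        using ry by (auto simp: Lg_def)
      have e3: "((x,y) \<in> Lg t k) = ((x',y') \<in> Lg t k)"
        unfolding L1 rc_less[OF k0, of x y] rc_less[OF k0, of x' y'] rx(3) ry(3) o1 by (rule refl)
      show ?thesis using e1 e2 e3 by blast
    next
      case zy: False
      then have yf: "F \<le> dd y" "y' = y" using cly by auto
      have s: "x div k \<noteq> y div k" "y div k \<noteq> x div k + 1" "x div k \<noteq> y div k + 1"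
        using sep[OF zx yf(1)] by auto
      have zr: "1 \<le> x div k" "x div k + 1 < t" using zrow zx by auto
      have e1: "x \<noteq> y" "x' \<noteq> y'" using s(1) rx(3) ry(3) by metis+
      have e2: "(x,y) \<notin> Eg t k" "(x',y') \<notin> Eg t k"
        unfolding yf(2) E_iff[OF rx(1) ry(1)] E_iff[OF rx(2) ry(1)] rx(3)[symmetric] using s zr by auto
      have L1: "(x,y) \<in> Lg t k \<longleftrightarrow> x < y" "(x',y') \<in> Lg t k \<longleftrightarrow> x' < y'"
        using ry by (auto simp: Lg_def)
      have e3: "((x,y) \<in> Lg t k) = ((x',y') \<in> Lg t k)"
        unfolding L1 rc_less[OF k0, of x y] rc_less[OF k0, of x' y'] rx(3)[symmetric] ry(3)[symmetric]
        using s(1) by simp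
      show ?thesis using e1 e2 e3 by blast
    qed
  next
    case zx: False
    then have xf: "F \<le> dd x" "x' = x" using clx by auto
    show ?thesis
    proof (cases "dd y \<le> Z")
      case zy: True
      have s: "y div k \<noteq> x div k" "x div k \<noteq> y div k + 1" "y div k \<noteq> x div k + 1"
        using sep[OF zy xf(1)] by auto
      have zr: "1 \<le> y div k" "y div k + 1 < t" using zrow zy by auto
      have e1: "x \<noteq> y" "x' \<noteq> y'" using s(1) rx(3) ry(3) by metis+
      have e2: "(x,y) \<notin> Eg t k" "(x',y') \<notin> Eg t k"
        unfolding xf(2) E_iff[OF rx(1) ry(1)] E_iff[OF rx(1) ry(2)] ry(3)[symmetric] using s zr by auto
      have L1: "(x,y) \<in> Lg t k \<longleftrightarrow> x < y" "(x',y') \<in> Lg t k \<longleftrightarrow> x' < y'"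
        using ry by (auto simp: Lg_def)
      have e3: "((x,y) \<in> Lg t k) = ((x',y') \<in> Lg t k)"
        unfolding L1 rc_less[OF k0, of x y] rc_less[OF k0, of x' y'] rx(3)[symmetric] ry(3)[symmetric]
        using s(1) by simp
      show ?thesis using e1 e2 e3 by blast
    next
      case zy: False
      then have "y' = y" using cly by auto
      then show ?thesis using xf by simp
    qed
  qed
  show ?thesis using main Aeq by blast
qed

end



context grid begin

lemma sound:
  assumes "inv j ps" "\<forall>v. (s v, s' v) \<in> set ps" "qr \<phi> \<le> j" "preds \<phi> \<subseteq> {..<m}"
  shows "sat {..<t*k} (Eg t k) (Lg t k) A s \<phi> = sat {..<t*k} (Eg t k) (Lg t k) A s' \<phi>"
  using assms
proof (induction \<phi> arbitrary: j ps s s')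
  case (FEq a b) then show ?case using inv_atomic[OF FEq.prems(1), of "s a" "s' a" "s b" "s' b"] by simp
next
  case (FEdge a b) then show ?case using inv_atomic[OF FEdge.prems(1), of "s a" "s' a" "s b" "s' b"] by simp
next
  case (FLess a b) then show ?case using inv_atomic[OF FLess.prems(1), of "s a" "s' a" "s b" "s' b"] by simp
next
  case (FPred i a) then show ?case using inv_atomic[OF FPred.prems(1), of "s a" "s' a" "s a" "s' a"] by simp
next
  case FFalse then show ?case by simp
next
  case (FNeg p) then show ?case by simp
next
  case (FConj p q)
  have "sat {..<t*k} (Eg t k) (Lg t k) A s p = sat {..<t*k} (Eg t k) (Lg t k) A s' p"
    using FConj.IH(1)[of j ps s s'] FConj.prems by simp
  moreover have "sat {..<t*k} (Eg t k) (Lg t k) A s q = sat {..<t*k} (Eg t k) (Lg t k) A s' q"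
    using FConj.IH(2)[of j ps s s'] FConj.prems by simp
  ultimately show ?case by simp
next
  case (FDisj p q)
  have "sat {..<t*k} (Eg t k) (Lg t k) A s p = sat {..<t*k} (Eg t k) (Lg t k) A s' p"
    using FDisj.IH(1)[of j ps s s'] FDisj.prems by simp
  moreover have "sat {..<t*k} (Eg t k) (Lg t k) A s q = sat {..<t*k} (Eg t k) (Lg t k) A s' q"
    using FDisj.IH(2)[of j ps s s'] FDisj.prems by simp
  ultimately show ?case by simp
next
  case (FEx x p)
  obtain j' where j: "j = Suc j'" "qr p \<le> j'" using FEx.prems(3) by (cases j) auto
  have pr: "preds p \<subseteq> {..<m}" using FEx.prems(4) by simp
  have fw: "sat {..<t*k} (Eg t k) (Lg t k) A (s(x := a)) p = sat {..<t*k} (Eg t k) (Lg t k) A (s'(x := b)) p"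
    if "inv j' (ps @ [(a,b)])" for a b
  proof (rule FEx.IH[OF that _ j(2) pr])
    show "\<forall>v. ((s(x := a)) v, (s'(x := b)) v) \<in> set (ps @ [(a, b)])" using FEx.prems(2) by auto
  qed
  show ?case
  proof
    assume "sat {..<t*k} (Eg t k) (Lg t k) A s (FEx x p)"
    then obtain a where a: "a < t*k" "sat {..<t*k} (Eg t k) (Lg t k) A (s(x := a)) p" by auto
    obtain b where b: "b < t*k" "inv j' (ps @ [(a,b)])" using inv_forth[of j' ps a] FEx.prems(1) j a by auto
    show "sat {..<t*k} (Eg t k) (Lg t k) A s' (FEx x p)" using fw[OF b(2)] a b by auto
  next
    assume "sat {..<t*k} (Eg t k) (Lg t k) A s' (FEx x p)"
    then obtain b where b: "b < t*k" "sat {..<t*k} (Eg t k) (Lg t k) A (s'(x := b)) p" by auto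
    obtain a where a: "a < t*k" "inv j' (ps @ [(a,b)])" using inv_back[of j' ps b] FEx.prems(1) j b by auto
    show "sat {..<t*k} (Eg t k) (Lg t k) A s (FEx x p)" using fw[OF a(2)] a b by auto
  qed
next
  case (FAll x p)
  obtain j' where j: "j = Suc j'" "qr p \<le> j'" using FAll.prems(3) by (cases j) auto
  have pr: "preds p \<subseteq> {..<m}" using FAll.prems(4) by simp
  have fw: "sat {..<t*k} (Eg t k) (Lg t k) A (s(x := a)) p = sat {..<t*k} (Eg t k) (Lg t k) A (s'(x := b)) p"
    if "inv j' (ps @ [(a,b)])" for a b
  proof (rule FAll.IH[OF that _ j(2) pr])
    show "\<forall>v. ((s(x := a)) v, (s'(x := b)) v) \<in> set (ps @ [(a, b)])" using FAll.prems(2) by auto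
  qed
  show ?case
  proof
    assume h: "sat {..<t*k} (Eg t k) (Lg t k) A s (FAll x p)"
    show "sat {..<t*k} (Eg t k) (Lg t k) A s' (FAll x p)"
    proof (simp only: sat.simps, intro ballI)
      fix b assume "b \<in> {..<t*k}"
      then obtain a where a: "a < t*k" "inv j' (ps @ [(a,b)])" using inv_back[of j' ps b] FAll.prems(1) j by auto
      then show "sat {..<t*k} (Eg t k) (Lg t k) A (s'(x := b)) p" using fw[OF a(2)] h by auto
    qed
  next
    assume h: "sat {..<t*k} (Eg t k) (Lg t k) A s' (FAll x p)"
    show "sat {..<t*k} (Eg t k) (Lg t k) A s (FAll x p)"
    proof (simp only: sat.simps, intro ballI)
      fix a assume "a \<in> {..<t*k}"
      then obtain b where b: "b < t*k" "inv j' (ps @ [(a,b)])" using inv_forth[of j' ps a] FAll.prems(1) j by auto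
      then show "sat {..<t*k} (Eg t k) (Lg t k) A (s(x := a)) p" using fw[OF b(2)] h by auto
    qed
  qed
qed

end



theorem mainTheorem11:
  fixes phi :: fo and m :: nat
  assumes "fv phi \<subseteq> {0, 1}"
      and "preds phi \<subseteq> {..<m}"
  shows "\<exists>(V :: nat set) E L. is_dipath_graph V E \<and> is_strict_linorder_on V L \<and>
           (\<forall>A. (\<forall>i<m. A i \<subseteq> V) \<longrightarrow>
              (\<exists>u\<in>V. \<exists>v1\<in>V. \<exists>v2\<in>V.
                 (sat2 V E L A phi u v1 \<longleftrightarrow> sat2 V E L A phi u v2) \<and>
                 (u, v2) \<in> E\<^sup>* \<and> (u, v1) \<notin> E\<^sup>*))"
proof -
  define Q where "Q = qr phi"
  define D where "D = (2::nat)^Q + 1"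
  define t where "t = 2*D + 1"
  define r0 where "r0 = D"
  define \<Lambda> :: "bool list list set" where
    "\<Lambda> = {xs. set xs \<subseteq> {ys. set ys \<subseteq> UNIV \<and> length ys = m} \<and> length xs = t}"
  have finI: "finite {ys :: bool list. set ys \<subseteq> UNIV \<and> length ys = m}"
    by (rule finite_lists_length_eq) simp
  have fin\<Lambda>: "finite \<Lambda>" unfolding \<Lambda>_def by (rule finite_lists_length_eq[OF finI])
  define N where "N = card (Tset \<Lambda> Q (Suc 0))"
  define k where "k = 2*N + 2"
  have k0: "0 < k" by (simp add: k_def)
  have D1: "1 \<le> D" by (simp add: D_def)
  have t0: "0 < t" by (simp add: t_def)
  have tk: "0 < t*k" using k0 t0 by simp
  show ?thesis
  proof (intro exI conjI allI impI)
    show "is_dipath_graph {..<t*k} (Eg t k)" using dipath tk by blast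
    show "is_strict_linorder_on {..<t*k} (Lg t k)" by (rule linord)
    fix A :: "nat \<Rightarrow> nat set" assume "\<forall>i<m. A i \<subseteq> {..<t*k}"
    interpret g: grid t k m A r0 D
      by unfold_locales (simp_all add: k0 r0_def t_def)
    have W\<Lambda>: "range g.W \<subseteq> \<Lambda>" unfolding g.W_def \<Lambda>_def by auto
    obtain i i' where ii: "i' + 2 \<le> i" "i < k" "tp g.W k Q [i] = tp g.W k Q [i']"
      using pigeon[OF fin\<Lambda> W\<Lambda>, of Q k] k_def N_def by auto
    have i'k: "i' < k" "i' + 1 < k" using ii by auto
    define u where "u = r0*k + i"
    define u' where "u' = r0*k + i'"
    define v where "v = (t-1)*k + (i'+1)"
    have r0t: "r0 < t" "t - 1 < t" by (simp_all add: r0_def t_def)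
    have uV: "u < t*k" "u' < t*k" "v < t*k" "0 < t*k"
      using rc_lt[OF r0t(1) ii(2)] rc_lt[OF r0t(1) i'k(1)] rc_lt[OF r0t(2) i'k(2)] tk
      by (simp_all add: u_def u'_def v_def)
    have dmu: "u div k = r0" "u mod k = i" "u' div k = r0" "u' mod k = i'"
      "v div k = t - 1" "v mod k = i' + 1"
      by (simp_all only: u_def u'_def v_def dm1[OF ii(2)] dm2[OF ii(2)] dm1[OF i'k(1)] dm2[OF i'k(1)]
          dm1[OF i'k(2)] dm2[OF i'k(2)])
    have pu: "pos t k u = i*t + r0" "pos t k u' = i'*t + r0" "pos t k v = (i'+1)*t + (t-1)"
      "pos t k 0 = 0"
      by (simp_all add: pos_def dmu)
    have nr1: "(u, v) \<notin> (Eg t k)\<^sup>*"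
    proof -
      have "(i'+2)*t \<le> i*t" using ii(1) by (rule mult_le_mono1)
      moreover have "(i'+2)*t = (i'+1)*t + t" by simp
      ultimately have "\<not> pos t k u \<le> pos t k v" unfolding pu using t0 by linarith
      then show ?thesis using reach_iff[OF uV(1) uV(3)] by simp
    qed
    have r2: "(u', v) \<in> (Eg t k)\<^sup>*"
    proof -
      have "(i'+1)*t = i'*t + t" by simp
      then have "pos t k u' \<le> pos t k v" unfolding pu using r0t by linarith
      then show ?thesis using reach_iff[OF uV(2) uV(3)] by simp
    qed
    have nr3: "(u', 0) \<notin> (Eg t k)\<^sup>*"
    proof -
      have "\<not> pos t k u' \<le> pos t k 0" unfolding pu using D1 r0_def by simp
      then show ?thesis using reach_iff[OF uV(2) uV(4)] by simp
    qed
    have ddu: "g.dd u = 0" "g.dd v = D" unfolding g.dd_def using dmu by (simp_all add: r0_def t_def)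
    have S1: "sat2 {..<t*k} (Eg t k) (Lg t k) A phi u v = sat2 {..<t*k} (Eg t k) (Lg t k) A phi u' v"
      unfolding sat2_def
    proof (rule g.sound[of Q "[(u,u'), (v,v)]"])
      show "g.inv Q [(u,u'), (v,v)]" unfolding g.inv_def
      proof (intro conjI exI)
        show "\<forall>(x,y)\<in>set [(u,u'), (v,v)]. x < t*k \<and> y < t*k \<and> x div k = y div k"
          using uV dmu by auto
        show "0 + 2^Q + 1 \<le> D" "D \<le> D" by (simp_all add: D_def)
        show "\<forall>(x,y)\<in>set [(u,u'), (v,v)]. g.dd x \<le> 0 \<or> (D \<le> g.dd x \<and> y = x)" using ddu by auto
        show "tp g.W k Q (map (\<lambda>p. fst p mod k) (filter (\<lambda>p. g.dd (fst p) \<le> 0) [(u,u'), (v,v)])) =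
              tp g.W k Q (map (\<lambda>p. snd p mod k) (filter (\<lambda>p. g.dd (fst p) \<le> 0) [(u,u'), (v,v)]))"
          using ddu D1 dmu ii(3) by simp
      qed
      show "\<forall>x. ((\<lambda>i. if i = 0 then u else v) x, (\<lambda>i. if i = 0 then u' else v) x) \<in> set [(u,u'), (v,v)]"
        by auto
      show "qr phi \<le> Q" by (simp add: Q_def)
      show "preds phi \<subseteq> {..<m}" by (rule assms(2))
    qed
    have S2: "sat2 {..<t*k} (Eg t k) (Lg t k) A phi u u = sat2 {..<t*k} (Eg t k) (Lg t k) A phi u' u'"
      unfolding sat2_def
    proof (rule g.sound[of Q "[(u,u')]"])
      show "g.inv Q [(u,u')]" unfolding g.inv_def
      proof (intro conjI exI)
        show "\<forall>(x,y)\<in>set [(u,u')]. x < t*k \<and> y < t*k \<and> x div k = y div k"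
          using uV dmu by auto
        show "0 + 2^Q + 1 \<le> D" "D \<le> D" by (simp_all add: D_def)
        show "\<forall>(x,y)\<in>set [(u,u')]. g.dd x \<le> 0 \<or> (D \<le> g.dd x \<and> y = x)" using ddu by auto
        show "tp g.W k Q (map (\<lambda>p. fst p mod k) (filter (\<lambda>p. g.dd (fst p) \<le> 0) [(u,u')])) =
              tp g.W k Q (map (\<lambda>p. snd p mod k) (filter (\<lambda>p. g.dd (fst p) \<le> 0) [(u,u')]))"
          using ddu dmu ii(3) by simp
      qed
      show "\<forall>x. ((\<lambda>i. if i = 0 then u else u) x, (\<lambda>i. if i = 0 then u' else u') x) \<in> set [(u,u')]"
        by auto
      show "qr phi \<le> Q" by (simp add: Q_def)
      show "preds phi \<subseteq> {..<m}" by (rule assms(2))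
    qed
    let ?s = "sat2 {..<t*k} (Eg t k) (Lg t k) A phi"
    have mem: "u \<in> {..<t*k}" "u' \<in> {..<t*k}" "v \<in> {..<t*k}" "0 \<in> {..<t*k}" using uV by auto
    show "\<exists>x\<in>{..<t*k}. \<exists>v1\<in>{..<t*k}. \<exists>v2\<in>{..<t*k}.
            (?s x v1 \<longleftrightarrow> ?s x v2) \<and> (x, v2) \<in> (Eg t k)\<^sup>* \<and> (x, v1) \<notin> (Eg t k)\<^sup>*"
    proof (cases "?s u v = ?s u u")
      case True
      then show ?thesis using mem nr1 by blast
    next
      case F1: False
      show ?thesis
      proof (cases "?s u' 0 = ?s u' u'")
        case True
        then show ?thesis using mem nr3 by blast
      next
        case F2: False
        show ?thesis
        proof (cases "?s u' 0 = ?s u' v")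
          case True
          then show ?thesis using mem nr3 r2 by blast
        next
          case False
          then have "?s u' u' = ?s u' v" using F2 by blast
          then have "?s u v = ?s u u" using S1 S2 by simp
          then show ?thesis using F1 by blast
        qed
      qed
    qed
  qed
qed



end
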